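(* Let $L$ be a distributive lattice and let $a,b\in L$ with $a<b$. Then $$\max\{\aleph_0,|[a,b]_L|\}\le\operatorname{dens}\big([\delta_a,\delta_b]_{\mathrm{FBL}\langle L\rangle}\big)\le\max\{\aleph_0,|L|\},$$ where $[a,b]_L=\{x\in L:a\le x\le b\}$ and $[\delta_a,\delta_b]_{\mathrm{FBL}\langle L\rangle}=\{f\in\mathrm{FBL}\langle L\rangle:\delta_a\le f\le\delta_b\}$ (with the norm topology).
   Context: $L^*$ is the set of all lattice homomorphisms $x^*:L\to[-1,1]$; for $x\in L$, $\delta_x:L^*\to\mathbb R$ is $\delta_x(x^* )=x^*(x)$. A function $f:L^*\to\mathbb R$ is positively homogeneous if $f(\lambda x^* )=\lambda f(x^* )$ whenever $\lambda\ge0$ and $\lambda x^*\in L^*$; for such $f$, $\|f\|=\sup\{\sum_{i=1}^m|f(x_i^* )|: m\in\mathbb N,\ x_i^*\in L^*,\ \sup_{x\in L}\sum_{i=1}^m|x_i^*(x)|\le1\}$. $\mathrm{FBL}\langle L\rangle$ is the norm closure of the vector sublattice generated by $\{\delta_x:x\in L\}$ inside the Banach lattice of positively homogeneous functions on $L^*$ with finite norm, with pointwise order and operations. The density character $\operatorname{dens}(S)$ is the least cardinality of a dense subset of $S$. *)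

theory Defs
  imports "HOL-Analysis.Analysis"
begin

definition lstar :: "('a::distrib_lattice \<Rightarrow> real) set" where
  "lstar = {\<phi>. (\<forall>x. -1 \<le> \<phi> x \<and> \<phi> x \<le> 1) \<and>
                 (\<forall>x y. \<phi> (inf x y) = min (\<phi> x) (\<phi> y)) \<and>
                 (\<forall>x y. \<phi> (sup x y) = max (\<phi> x) (\<phi> y))}"

text \<open>Functions on L^* are represented as functions on 'a => real that vanish off L^*.\<close>
definition fbl_delta :: "'a::distrib_lattice \<Rightarrow> (('a \<Rightarrow> real) \<Rightarrow> real)" where
  "fbl_delta x = (\<lambda>\<phi>. if \<phi> \<in> lstar then \<phi> x else 0)"

definition pos_homog :: "(('a::distrib_lattice \<Rightarrow> real) \<Rightarrow> real) \<Rightarrow> bool" where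
  "pos_homog f \<longleftrightarrow> (\<forall>\<phi>\<in>lstar. \<forall>c::real. c \<ge> 0 \<longrightarrow> (\<lambda>x. c * \<phi> x) \<in> lstar \<longrightarrow>
                      f (\<lambda>x. c * \<phi> x) = c * f \<phi>)"

definition fbl_norm :: "(('a::distrib_lattice \<Rightarrow> real) \<Rightarrow> real) \<Rightarrow> ereal" where
  "fbl_norm f = Sup {ereal (\<Sum>i<m. \<bar>f (\<phi> i)\<bar>) | (m::nat) \<phi>.
                       (\<forall>i<m. (\<phi> i :: 'a \<Rightarrow> real) \<in> lstar) \<and>
                       (\<forall>x. (\<Sum>i<m. \<bar>\<phi> i x\<bar>) \<le> 1)}"

definition fbl_space :: "(('a::distrib_lattice \<Rightarrow> real) \<Rightarrow> real) set" where
  "fbl_space = {f. (\<forall>\<phi>. \<phi> \<notin> lstar \<longrightarrow> f \<phi> = 0) \<and> pos_homog f \<and> fbl_norm f < \<infinity>}"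

inductive_set fbl_gen :: "(('a::distrib_lattice \<Rightarrow> real) \<Rightarrow> real) set" where
  gen_delta: "fbl_delta x \<in> fbl_gen"
| gen_add: "f \<in> fbl_gen \<Longrightarrow> g \<in> fbl_gen \<Longrightarrow> (\<lambda>\<phi>. f \<phi> + g \<phi>) \<in> fbl_gen"
| gen_scale: "f \<in> fbl_gen \<Longrightarrow> (\<lambda>\<phi>. c * f \<phi>) \<in> fbl_gen"
| gen_sup: "f \<in> fbl_gen \<Longrightarrow> g \<in> fbl_gen \<Longrightarrow> (\<lambda>\<phi>. max (f \<phi>) (g \<phi>)) \<in> fbl_gen"

definition FBL :: "(('a::distrib_lattice \<Rightarrow> real) \<Rightarrow> real) set" where
  "FBL = {f \<in> fbl_space. \<forall>\<epsilon>>0. \<exists>g\<in>fbl_gen. fbl_norm (\<lambda>\<phi>. f \<phi> - g \<phi>) < ereal \<epsilon>}"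

definition fbl_interval :: "'a::distrib_lattice \<Rightarrow> 'a \<Rightarrow> (('a \<Rightarrow> real) \<Rightarrow> real) set" where
  "fbl_interval a b = {f \<in> FBL. \<forall>\<phi>. fbl_delta a \<phi> \<le> f \<phi> \<and> f \<phi> \<le> fbl_delta b \<phi>}"

definition fbl_dense_in :: "(('a::distrib_lattice \<Rightarrow> real) \<Rightarrow> real) set \<Rightarrow> (('a \<Rightarrow> real) \<Rightarrow> real) set \<Rightarrow> bool" where
  "fbl_dense_in D S \<longleftrightarrow> D \<subseteq> S \<and>
     (\<forall>f\<in>S. \<forall>\<epsilon>>0. \<exists>g\<in>D. fbl_norm (\<lambda>\<phi>. f \<phi> - g \<phi>) < ereal \<epsilon>)"

end

theory Submission
  imports Defs
begin



definition nb :: "(('a::distrib_lattice \<Rightarrow> real) \<Rightarrow> real) \<Rightarrow> real \<Rightarrow> bool" where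
  "nb f r \<longleftrightarrow> (\<forall>(m::nat) (\<phi>::nat \<Rightarrow> 'a \<Rightarrow> real). (\<forall>i<m. \<phi> i \<in> lstar) \<and> (\<forall>x. (\<Sum>i<m. \<bar>\<phi> i x\<bar>) \<le> 1)
      \<longrightarrow> (\<Sum>i<m. \<bar>f (\<phi> i)\<bar>) \<le> r)"

lemma nb_norm_le: "nb f r \<Longrightarrow> fbl_norm f \<le> ereal r"
  unfolding fbl_norm_def
proof (rule Sup_least)
  fix z assume nb: "nb f r" and "z \<in> {ereal (\<Sum>i<m. \<bar>f (\<phi> i)\<bar>) | (m::nat) \<phi>.
                       (\<forall>i<m. (\<phi> i :: 'a \<Rightarrow> real) \<in> lstar) \<and>
                       (\<forall>x. (\<Sum>i<m. \<bar>\<phi> i x\<bar>) \<le> 1)}"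
  then obtain m and \<phi> :: "nat \<Rightarrow> 'a \<Rightarrow> real" where z: "z = ereal (\<Sum>i<m. \<bar>f (\<phi> i)\<bar>)"
    and c: "(\<forall>i<m. \<phi> i \<in> lstar) \<and> (\<forall>x. (\<Sum>i<m. \<bar>\<phi> i x\<bar>) \<le> 1)" by blast
  have "(\<Sum>i<m. \<bar>f (\<phi> i)\<bar>) \<le> r" using nb c unfolding nb_def by blast
  then show "z \<le> ereal r" using z by simp
qed

lemma nb_norm_lt: "nb f r \<Longrightarrow> r < e \<Longrightarrow> fbl_norm f < ereal e"
proof -
  assume "nb f r" "r < e"
  then have "fbl_norm f \<le> ereal r" "ereal r < ereal e" using nb_norm_le by auto
  then show ?thesis by (rule le_less_trans)
qed

lemma norm_lt_nb: "fbl_norm f < ereal e \<Longrightarrow> nb f e"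
  unfolding nb_def
proof (intro allI impI)
  fix m and \<phi> :: "nat \<Rightarrow> 'a \<Rightarrow> real"
  assume h: "fbl_norm f < ereal e" "(\<forall>i<m. \<phi> i \<in> lstar) \<and> (\<forall>x. (\<Sum>i<m. \<bar>\<phi> i x\<bar>) \<le> 1)"
  have mem: "ereal (\<Sum>i<m. \<bar>f (\<phi> i)\<bar>) \<in> {ereal (\<Sum>i<m. \<bar>f (\<phi> i)\<bar>) | (m::nat) \<phi>.
                       (\<forall>i<m. (\<phi> i :: 'a \<Rightarrow> real) \<in> lstar) \<and>
                       (\<forall>x. (\<Sum>i<m. \<bar>\<phi> i x\<bar>) \<le> 1)}"
    apply (rule CollectI)
    apply (rule exI[where x=m])
    apply (rule exI[where x=\<phi>])
    using h(2) by simp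
  have "ereal (\<Sum>i<m. \<bar>f (\<phi> i)\<bar>) \<le> fbl_norm f"
    unfolding fbl_norm_def using mem by (rule Sup_upper)
  then have "ereal (\<Sum>i<m. \<bar>f (\<phi> i)\<bar>) < ereal e" using h(1) by (rule le_less_trans)
  then show "(\<Sum>i<m. \<bar>f (\<phi> i)\<bar>) \<le> e" by simp
qed

lemma nb_comb:
  assumes "\<And>\<phi>. \<phi> \<in> lstar \<Longrightarrow> \<bar>f \<phi>\<bar> \<le> a * \<bar>g \<phi>\<bar> + c * \<bar>h \<phi>\<bar>"
    and "a \<ge> 0" "c \<ge> 0" "nb g r" "nb h s"
  shows "nb f (a * r + c * s)"
  unfolding nb_def
proof (intro allI impI)
  fix m and \<phi> :: "nat \<Rightarrow> 'a \<Rightarrow> real"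
  assume h: "(\<forall>i<m. \<phi> i \<in> lstar) \<and> (\<forall>x. (\<Sum>i<m. \<bar>\<phi> i x\<bar>) \<le> 1)"
  have "(\<Sum>i<m. \<bar>f (\<phi> i)\<bar>) \<le> (\<Sum>i<m. a * \<bar>g (\<phi> i)\<bar> + c * \<bar>h (\<phi> i)\<bar>)"
    using h assms(1) by (intro sum_mono) auto
  also have "\<dots> = a * (\<Sum>i<m. \<bar>g (\<phi> i)\<bar>) + c * (\<Sum>i<m. \<bar>h (\<phi> i)\<bar>)"
    by (simp add: sum.distrib sum_distrib_left)
  also have "\<dots> \<le> a * r + c * s"
    using assms(2-5) h unfolding nb_def by (intro add_mono mult_left_mono) auto
  finally show "(\<Sum>i<m. \<bar>f (\<phi> i)\<bar>) \<le> a * r + c * s" .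
qed

lemma nb_zero: "nb (\<lambda>_. 0) 0" unfolding nb_def by simp

lemma nb_mono:
  assumes "\<And>\<phi>. \<phi> \<in> lstar \<Longrightarrow> \<bar>f \<phi>\<bar> \<le> \<bar>g \<phi>\<bar>" "nb g r"
  shows "nb f r"
  using nb_comb[of f 1 g 0 "\<lambda>_. 0" r 0] assms nb_zero by simp

lemma nb_add:
  assumes "\<And>\<phi>. \<phi> \<in> lstar \<Longrightarrow> \<bar>f \<phi>\<bar> \<le> \<bar>g \<phi>\<bar> + \<bar>h \<phi>\<bar>" "nb g r" "nb h s"
  shows "nb f (r + s)"
  using nb_comb[of f 1 g 1 h r s] assms by simp

lemma nb_delta: "nb (fbl_delta x) 1"
  unfolding nb_def fbl_delta_def by auto

lemma nb_point: "nb f r \<Longrightarrow> \<phi> \<in> lstar \<Longrightarrow> \<bar>f \<phi>\<bar> \<le> r"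
proof -
  assume nb: "nb f r" and p: "\<phi> \<in> lstar"
  have b: "\<forall>x. \<bar>\<phi> x\<bar> \<le> 1"
    using p unfolding lstar_def by (simp add: abs_le_iff)
  note imp = nb[unfolded nb_def, THEN spec[where x=1], THEN spec[where x="\<lambda>_. \<phi>"]]
  show ?thesis using imp p b by simp
qed

lemma lstar_mono: "\<phi> \<in> lstar \<Longrightarrow> x \<le> y \<Longrightarrow> \<phi> x \<le> \<phi> y"
proof -
  assume p: "\<phi> \<in> lstar" and xy: "x \<le> y"
  have "\<phi> (inf x y) = min (\<phi> x) (\<phi> y)" using p unfolding lstar_def by blast
  moreover have "inf x y = x" using xy by (simp add: inf.absorb1)
  ultimately have "\<phi> x = min (\<phi> x) (\<phi> y)" by metis
  then show ?thesis by (metis min.cobounded2)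
qed

lemma delta_le: "a \<le> b \<Longrightarrow> fbl_delta a \<phi> \<le> fbl_delta b \<phi>"
  unfolding fbl_delta_def using lstar_mono[of \<phi> a b] by simp




definition lideal :: "'a::distrib_lattice set \<Rightarrow> bool" where
  "lideal I \<longleftrightarrow> (\<forall>u\<in>I. \<forall>v. v \<le> u \<longrightarrow> v \<in> I) \<and> (\<forall>u\<in>I. \<forall>v\<in>I. sup u v \<in> I)"

lemma lidealI:
  assumes "\<And>u v. u \<in> I \<Longrightarrow> v \<le> u \<Longrightarrow> v \<in> I" "\<And>u v. u \<in> I \<Longrightarrow> v \<in> I \<Longrightarrow> sup u v \<in> I"
  shows "lideal I"
  using assms unfolding lideal_def by blast

lemma lidealD:
  assumes "lideal I"
  shows "u \<in> I \<Longrightarrow> v \<le> u \<Longrightarrow> v \<in> I" "u \<in> I \<Longrightarrow> v \<in> I \<Longrightarrow> sup u v \<in> I"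
  using assms unfolding lideal_def by blast+

lemma prime_sep:
  fixes x y :: "'a::distrib_lattice"
  assumes xy: "\<not> x \<le> y"
  shows "\<exists>\<phi>\<in>lstar. \<phi> x = 1 \<and> \<phi> y = 0"
proof -
  define F where "F = {I. lideal I \<and> y \<in> I \<and> (\<forall>u\<in>I. \<not> x \<le> u)}"
  have down: "{v. v \<le> y} \<in> F"
  proof -
    have "lideal {v. v \<le> y}"
    proof (rule lidealI)
      fix u v assume "u \<in> {v. v \<le> y}" "v \<le> u"
      then show "v \<in> {v. v \<le> y}" using order.trans[of v u y] by simp
    next
      fix u v assume "u \<in> {v. v \<le> y}" "v \<in> {v. v \<le> y}"
      then show "sup u v \<in> {v. v \<le> y}" by simp
    qed
    moreover have "\<forall>u\<in>{v. v \<le> y}. \<not> x \<le> u"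
    proof
      fix u assume "u \<in> {v. v \<le> y}"
      then have "u \<le> y" by simp
      then show "\<not> x \<le> u" using xy order.trans[of x u y] by blast
    qed
    ultimately show ?thesis unfolding F_def by simp
  qed
  have "\<forall>C\<in>chains F. \<exists>U\<in>F. \<forall>X\<in>C. X \<subseteq> U"
  proof
    fix C assume C: "C \<in> chains F"
    show "\<exists>U\<in>F. \<forall>X\<in>C. X \<subseteq> U"
    proof (cases "C = {}")
      case True then show ?thesis using down by auto
    next
      case False
      have CF: "C \<subseteq> F" and ch: "\<And>X Y. X \<in> C \<Longrightarrow> Y \<in> C \<Longrightarrow> X \<subseteq> Y \<or> Y \<subseteq> X"
        using C unfolding chains_def chain_subset_def by blast+
      have CI: "\<And>X. X \<in> C \<Longrightarrow> lideal X \<and> y \<in> X \<and> (\<forall>u\<in>X. \<not> x \<le> u)"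
        using CF unfolding F_def by blast
      have "lideal (\<Union>C)"
      proof (rule lidealI)
        fix u v assume "u \<in> \<Union>C" "v \<le> u"
        then obtain X where "X \<in> C" "u \<in> X" by blast
        then have "v \<in> X" using CI lidealD(1) \<open>v \<le> u\<close> by blast
        then show "v \<in> \<Union>C" using \<open>X \<in> C\<close> by blast
      next
        fix u v assume u: "u \<in> \<Union>C" and v: "v \<in> \<Union>C"
        then obtain X Y where X: "X \<in> C" "u \<in> X" and Y: "Y \<in> C" "v \<in> Y" by blast
        from ch[OF X(1) Y(1)] show "sup u v \<in> \<Union>C"
        proof
          assume "X \<subseteq> Y"
          then have "sup u v \<in> Y" using X Y CI lidealD(2) by blast
          then show ?thesis using Y by blast
        next
          assume "Y \<subseteq> X"
          then have "sup u v \<in> X" using X Y CI lidealD(2) by blast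
          then show ?thesis using X by blast
        qed
      qed
      moreover have "y \<in> \<Union>C" using False CI by blast
      moreover have "\<forall>u\<in>\<Union>C. \<not> x \<le> u" using CI by blast
      ultimately have "\<Union>C \<in> F" unfolding F_def by simp
      then show ?thesis by blast
    qed
  qed
  from Zorn_Lemma2[OF this] obtain M where M: "M \<in> F" and max: "\<And>X. X \<in> F \<Longrightarrow> M \<subseteq> X \<Longrightarrow> X = M"
    by blast
  have Mi: "lideal M" and yM: "y \<in> M" and xM: "\<And>u. u \<in> M \<Longrightarrow> \<not> x \<le> u"
    using M unfolding F_def by auto
  note Md = lidealD(1)[OF Mi] and Ms = lidealD(2)[OF Mi]
  have ext: "\<exists>m\<in>M. x \<le> sup m u" if u: "u \<notin> M" for u
  proof (rule ccontr)
    assume nx: "\<not> (\<exists>m\<in>M. x \<le> sup m u)"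
    define Mu where "Mu = {w. \<exists>m\<in>M. w \<le> sup m u}"
    have "lideal Mu"
    proof (rule lidealI)
      fix w v assume "w \<in> Mu" "v \<le> w"
      then obtain m where "m \<in> M" "w \<le> sup m u" unfolding Mu_def by blast
      then have "v \<le> sup m u" using \<open>v \<le> w\<close> order.trans by blast
      then show "v \<in> Mu" unfolding Mu_def using \<open>m \<in> M\<close> by blast
    next
      fix w v assume "w \<in> Mu" "v \<in> Mu"
      then obtain m1 m2 where m: "m1 \<in> M" "m2 \<in> M" "w \<le> sup m1 u" "v \<le> sup m2 u" unfolding Mu_def by blast
      have "sup m1 m2 \<in> M" using Ms m by blast
      moreover have "sup w v \<le> sup (sup m1 m2) u"
      proof (rule sup_least)
        have "sup m1 u \<le> sup (sup m1 m2) u" by (intro sup_mono) simp_all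
        then show "w \<le> sup (sup m1 m2) u" using m(3) order.trans by blast
      next
        have "sup m2 u \<le> sup (sup m1 m2) u" by (intro sup_mono) simp_all
        then show "v \<le> sup (sup m1 m2) u" using m(4) order.trans by blast
      qed
      ultimately show "sup w v \<in> Mu" unfolding Mu_def by blast
    qed
    moreover have "y \<in> Mu" unfolding Mu_def using yM sup_ge1[of y u] by blast
    moreover have "\<forall>w\<in>Mu. \<not> x \<le> w"
    proof
      fix w assume "w \<in> Mu"
      then obtain m where "m \<in> M" "w \<le> sup m u" unfolding Mu_def by blast
      then show "\<not> x \<le> w" using nx order.trans by blast
    qed
    ultimately have "Mu \<in> F" unfolding F_def by simp
    moreover have "M \<subseteq> Mu"
    proof
      fix m assume "m \<in> M" then show "m \<in> Mu" unfolding Mu_def using sup_ge1[of m u] by blast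
    qed
    ultimately have "Mu = M" using max by blast
    moreover have "u \<in> Mu" unfolding Mu_def using yM sup_ge2[of u y] by blast
    ultimately show False using u by simp
  qed
  have prime: "inf u v \<in> M \<longleftrightarrow> u \<in> M \<or> v \<in> M" for u v
  proof
    assume iv: "inf u v \<in> M"
    show "u \<in> M \<or> v \<in> M"
    proof (rule ccontr)
      assume "\<not> (u \<in> M \<or> v \<in> M)"
      then obtain m1 m2 where m: "m1 \<in> M" "m2 \<in> M" "x \<le> sup m1 u" "x \<le> sup m2 v"
        using ext by blast
      define m where "m = sup m1 m2"
      have mM: "m \<in> M" using m Ms m_def by blast
      have "sup m1 u \<le> sup m u" unfolding m_def by (intro sup_mono) simp_all
      then have 1: "x \<le> sup m u" using m(3) order.trans by blast
      have "sup m2 v \<le> sup m v" unfolding m_def by (intro sup_mono) simp_all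
      then have 2: "x \<le> sup m v" using m(4) order.trans by blast
      have "x \<le> inf (sup m u) (sup m v)" using 1 2 by (rule inf_greatest)
      also have "inf (sup m u) (sup m v) = sup m (inf u v)" by (rule sup_inf_distrib1[symmetric])
      finally have "x \<le> sup m (inf u v)" .
      moreover have "sup m (inf u v) \<in> M" using Ms mM iv by blast
      ultimately show False using xM by blast
    qed
  next
    assume "u \<in> M \<or> v \<in> M"
    then show "inf u v \<in> M" using Md inf.cobounded1[of u v] inf.cobounded2[of u v] by blast
  qed
  have supM: "sup u v \<in> M \<longleftrightarrow> u \<in> M \<and> v \<in> M" for u v
  proof
    assume h: "sup u v \<in> M"
    have "u \<in> M" using Md[OF h sup.cobounded1] .
    moreover have "v \<in> M" using Md[OF h sup.cobounded2] .
    ultimately show "u \<in> M \<and> v \<in> M" ..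
  next
    assume "u \<in> M \<and> v \<in> M"
    then show "sup u v \<in> M" using Ms by blast
  qed
  define \<phi> where "\<phi> = (\<lambda>w. if w \<in> M then 0 else (1::real))"
  have b1: "\<forall>w. -1 \<le> \<phi> w \<and> \<phi> w \<le> 1" unfolding \<phi>_def by simp
  have b2: "\<forall>u v. \<phi> (inf u v) = min (\<phi> u) (\<phi> v)"
  proof (intro allI)
    fix u v show "\<phi> (inf u v) = min (\<phi> u) (\<phi> v)" unfolding \<phi>_def using prime[of u v] by simp
  qed
  have b3: "\<forall>u v. \<phi> (sup u v) = max (\<phi> u) (\<phi> v)"
  proof (intro allI)
    fix u v show "\<phi> (sup u v) = max (\<phi> u) (\<phi> v)" unfolding \<phi>_def using supM[of u v] by simp
  qed
  have "\<phi> \<in> lstar" unfolding lstar_def using b1 b2 b3 by blast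
  moreover have "\<phi> x = 1" using xM \<phi>_def by auto
  moreover have "\<phi> y = 0" using yM \<phi>_def by auto
  ultimately show ?thesis by blast
qed




lemma gen_zero_off: "f \<in> fbl_gen \<Longrightarrow> \<phi> \<notin> lstar \<Longrightarrow> f \<phi> = 0"
  by (induction f rule: fbl_gen.induct) (auto simp: fbl_delta_def)

lemma max_cmult: "(c::real) \<ge> 0 \<Longrightarrow> max (c * u) (c * v) = c * max u v"
  by (simp add: max_mult_distrib_left)

lemma gen_pos_homog: "f \<in> fbl_gen \<Longrightarrow> pos_homog f"
proof (induction f rule: fbl_gen.induct)
  case (gen_delta x) then show ?case unfolding pos_homog_def fbl_delta_def by auto
next
  case (gen_add f g) then show ?case unfolding pos_homog_def by (simp add: distrib_left)
next
  case (gen_scale f c) then show ?case unfolding pos_homog_def by simp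
next
  case (gen_sup f g) then show ?case unfolding pos_homog_def by (simp add: max_cmult)
qed

lemma gen_nb: "f \<in> fbl_gen \<Longrightarrow> \<exists>M. nb f M"
proof (induction f rule: fbl_gen.induct)
  case (gen_delta x) then show ?case using nb_delta by blast
next
  case (gen_add f g)
  then obtain M1 M2 where "nb f M1" "nb g M2" by blast
  then have "nb (\<lambda>\<phi>. f \<phi> + g \<phi>) (M1 + M2)" by (rule nb_add[rotated]) auto
  then show ?case by blast
next
  case (gen_scale f c)
  then obtain M1 where "nb f M1" by blast
  then have "nb (\<lambda>\<phi>. c * f \<phi>) (\<bar>c\<bar> * M1 + 0 * 0)"
    by (intro nb_comb[OF _ _ _ _ nb_zero]) (auto simp: abs_mult)
  then show ?case by blast
next
  case (gen_sup f g)
  then obtain M1 M2 where "nb f M1" "nb g M2" by blast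
  then have "nb (\<lambda>\<phi>. max (f \<phi>) (g \<phi>)) (M1 + M2)" by (rule nb_add[rotated]) auto
  then show ?case by blast
qed

lemma gen_FBL: "f \<in> fbl_gen \<Longrightarrow> f \<in> FBL"
proof -
  assume f: "f \<in> fbl_gen"
  obtain M where M: "nb f M" using gen_nb[OF f] by blast
  have "fbl_norm f \<le> ereal M" using nb_norm_le[OF M] .
  moreover have "ereal M < \<infinity>" by simp
  ultimately have "fbl_norm f < \<infinity>" by (rule le_less_trans)
  then have "f \<in> fbl_space" unfolding fbl_space_def using f gen_zero_off gen_pos_homog by blast
  moreover have "fbl_norm (\<lambda>\<phi>. f \<phi> - f \<phi>) < ereal e" if "e > 0" for e
    using nb_norm_lt[OF nb_zero that] by simp
  ultimately show ?thesis unfolding FBL_def using f by blast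
qed




lemma delta_in_interval:
  assumes "a \<le> x" "x \<le> b"
  shows "fbl_delta x \<in> fbl_interval a b"
  unfolding fbl_interval_def using assms gen_FBL[OF fbl_gen.gen_delta] delta_le by blast

lemma lower_bound:
  fixes a b :: "'a::distrib_lattice"
  assumes ab: "a < b" and dense: "fbl_dense_in D (fbl_interval a b)"
  shows "infinite D \<and> (card_of {a..b}, card_of D) \<in> ordLeq"
proof
  have DS: "D \<subseteq> fbl_interval a b"
    and dens: "\<And>f e. f \<in> fbl_interval a b \<Longrightarrow> e > 0 \<Longrightarrow> \<exists>g\<in>D. fbl_norm (\<lambda>\<phi>. f \<phi> - g \<phi>) < ereal e"
    using dense unfolding fbl_dense_in_def by auto
  show "infinite D"
  proof
    assume finD: "finite D"
    obtain \<phi>0 where \<phi>0: "\<phi>0 \<in> lstar" "\<phi>0 b = 1" "\<phi>0 a = 0"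
      using prime_sep[of b a] ab less_le_not_le by blast
    define V where "V = (\<lambda>d. d \<phi>0) ` D"
    have finV: "finite V" using finD V_def by simp
    have "\<not> ({0..1::real} \<subseteq> V)"
    proof
      assume "{0..1::real} \<subseteq> V"
      then have "finite {0..1::real}" using finV finite_subset by blast
      moreover have "\<not> finite {0..1::real}" by (rule infinite_Icc) simp
      ultimately show False by contradiction
    qed
    then obtain t where t0: "t \<in> {0..1::real}" "t \<notin> V" by blast
    then have t: "0 \<le> t" "t \<le> 1" "t \<notin> V" by simp_all
    obtain \<delta> where \<delta>: "\<delta> > 0" "\<And>v. v \<in> V \<Longrightarrow> v \<noteq> t \<Longrightarrow> \<delta> \<le> dist t v"
      using finite_set_avoid[OF finV, of t] by blast
    define f where "f = (\<lambda>\<phi>. (1 - t) * fbl_delta a \<phi> + t * fbl_delta b \<phi>)"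
    have fgen: "f \<in> fbl_gen" unfolding f_def
      by (intro fbl_gen.gen_add fbl_gen.gen_scale fbl_gen.gen_delta)
    have "fbl_delta a \<phi> \<le> f \<phi> \<and> f \<phi> \<le> fbl_delta b \<phi>" for \<phi>
    proof -
      have le: "fbl_delta a \<phi> \<le> fbl_delta b \<phi>" using delta_le[OF less_imp_le[OF ab]] .
      have "0 \<le> t * (fbl_delta b \<phi> - fbl_delta a \<phi>)" using le t by simp
      moreover have "0 \<le> (1 - t) * (fbl_delta b \<phi> - fbl_delta a \<phi>)" using le t by simp
      ultimately show ?thesis unfolding f_def by (simp add: algebra_simps)
    qed
    then have fI: "f \<in> fbl_interval a b" unfolding fbl_interval_def using gen_FBL[OF fgen] by blast
    obtain g where g: "g \<in> D" "fbl_norm (\<lambda>\<phi>. f \<phi> - g \<phi>) < ereal (\<delta>/2)"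
      using dens[OF fI, of "\<delta>/2"] \<delta> by auto
    have "\<bar>f \<phi>0 - g \<phi>0\<bar> \<le> \<delta>/2" using nb_point[OF norm_lt_nb[OF g(2)] \<phi>0(1)] by simp
    moreover have "f \<phi>0 = t" unfolding f_def fbl_delta_def using \<phi>0 by simp
    moreover have "g \<phi>0 \<in> V" using g V_def by auto
    moreover have "g \<phi>0 \<noteq> t" using t(3) \<open>g \<phi>0 \<in> V\<close> by blast
    ultimately have "\<delta> \<le> dist t (g \<phi>0)" using \<delta>(2)[of "g \<phi>0"] by blast
    then have "\<delta> \<le> \<bar>t - g \<phi>0\<bar>" by (simp add: dist_real_def)
    with \<open>\<bar>f \<phi>0 - g \<phi>0\<bar> \<le> \<delta>/2\<close> \<open>f \<phi>0 = t\<close> \<delta>(1) show False by simp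
  qed
  have ex: "\<exists>g. g \<in> D \<and> fbl_norm (\<lambda>\<phi>. fbl_delta x \<phi> - g \<phi>) < ereal (1/3)" if "x \<in> {a..b}" for x
  proof -
    have "a \<le> x" "x \<le> b" using that by auto
    then have "fbl_delta x \<in> fbl_interval a b" by (rule delta_in_interval)
    then show ?thesis using dens[of "fbl_delta x" "1/3"] by auto
  qed
  define d where "d x = (SOME g. g \<in> D \<and> fbl_norm (\<lambda>\<phi>. fbl_delta x \<phi> - g \<phi>) < ereal (1/3))" for x
  have d: "d x \<in> D" "fbl_norm (\<lambda>\<phi>. fbl_delta x \<phi> - d x \<phi>) < ereal (1/3)" if "x \<in> {a..b}" for x
    using someI_ex[OF ex[OF that]] unfolding d_def by auto
  have close: "\<bar>\<phi> x - d x \<phi>\<bar> \<le> 1/3" if "x \<in> {a..b}" "\<phi> \<in> lstar" for x \<phi>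
    using nb_point[OF norm_lt_nb[OF d(2)[OF that(1)]] that(2)] that(2) by (simp add: fbl_delta_def)
  have sep: "\<exists>\<phi>\<in>lstar. \<bar>\<phi> x - \<phi> y\<bar> = 1" if "x \<noteq> y" for x y :: 'a
  proof (cases "x \<le> y")
    case True
    then have "\<not> y \<le> x" using that by auto
    then show ?thesis using prime_sep[of y x] by force
  next
    case False
    then show ?thesis using prime_sep[of x y] by force
  qed
  have "inj_on d {a..b}"
  proof
    fix x y assume xy: "x \<in> {a..b}" "y \<in> {a..b}" "d x = d y"
    show "x = y"
    proof (rule ccontr)
      assume "x \<noteq> y"
      then obtain \<phi> where \<phi>: "\<phi> \<in> lstar" "\<bar>\<phi> x - \<phi> y\<bar> = 1" using sep by blast
      have "\<bar>\<phi> x - d x \<phi>\<bar> \<le> 1/3" using close[OF xy(1) \<phi>(1)] .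
      moreover have "\<bar>\<phi> y - d y \<phi>\<bar> \<le> 1/3" using close[OF xy(2) \<phi>(1)] .
      ultimately have "\<bar>\<phi> x - d x \<phi>\<bar> \<le> 1/3" "\<bar>\<phi> y - d x \<phi>\<bar> \<le> 1/3" using xy(3) by simp_all
      then show False using \<phi>(2) by linarith
    qed
  qed
  moreover have "d ` {a..b} \<subseteq> D" using d by auto
  ultimately show "(card_of {a..b}, card_of D) \<in> ordLeq"
    using card_of_ordLeq by blast
qed



unbundle cardinal_syntax

lemma lists_card_le:
  assumes inf: "infinite A"
  shows "|lists A| \<le>o |A|"
proof -
  define L where "L n = {xs \<in> lists A. length xs = n}" for n
  have Ln: "|L n| \<le>o |A|" for n
  proof (induction n)
    case 0
    have "L 0 = {[]}" unfolding L_def by auto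
    moreover have "A \<noteq> {}" using inf by auto
    ultimately show ?case using card_of_singl_ordLeq by metis
  next
    case (Suc n)
    have "L (Suc n) = (\<lambda>(x, xs). x # xs) ` (A \<times> L n)"
      unfolding L_def by (auto simp: length_Suc_conv image_iff)
    then have "|L (Suc n)| \<le>o |A \<times> L n|" by (simp add: card_of_image)
    also have "|A \<times> L n| \<le>o |A \<times> A|" using Suc card_of_Times_mono2 by blast
    also have "|A \<times> A| \<le>o |A|" using card_of_Times_same_infinite[OF inf] ordIso_iff_ordLeq by blast
    finally show ?case .
  qed
  have "lists A = (\<Union>n\<in>UNIV. L n)" unfolding L_def by auto
  moreover have "|\<Union>n\<in>UNIV. L n| \<le>o |A|"
    using card_of_UNION_ordLeq_infinite[OF inf, of UNIV L] Ln infinite_iff_card_of_nat inf by blast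
  ultimately show ?thesis by simp
qed

lemma tok_card:
  assumes "\<not> countable (UNIV :: 'a set)"
  shows "|UNIV :: ('a + (rat + bool)) list set| \<le>o |UNIV :: 'a set|"
proof -
  have inf: "infinite (UNIV :: 'a set)" using assms countable_finite by blast
  have c1: "|UNIV :: (rat + bool) set| \<le>o |UNIV :: nat set|"
    using countableI_type[of "UNIV::(rat+bool) set"] unfolding countable_def card_of_ordLeq[symmetric] by blast
  have c2: "|UNIV :: nat set| \<le>o |UNIV :: 'a set|" using inf infinite_iff_card_of_nat by blast
  have "|(UNIV :: 'a set) <+> (UNIV :: (rat + bool) set)| =o |UNIV :: 'a set|"
    using card_of_Plus_infinite1[OF inf] ordLeq_transitive[OF c1 c2] by blast
  then have t: "|UNIV :: ('a + (rat + bool)) set| \<le>o |UNIV :: 'a set|"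
    using ordIso_iff_ordLeq by force
  have inf2: "infinite (UNIV :: ('a + (rat + bool)) set)"
  proof
    assume "finite (UNIV :: ('a + (rat + bool)) set)"
    then have "finite (range (Inl :: 'a \<Rightarrow> 'a + (rat + bool)))" by (rule finite_subset[rotated]) simp
    then have "finite (UNIV :: 'a set)" by (rule finite_imageD) simp
    with inf show False by simp
  qed
  have "|lists (UNIV :: ('a + (rat + bool)) set)| \<le>o |UNIV :: ('a + (rat + bool)) set|"
    by (rule lists_card_le[OF inf2])
  then show ?thesis using t ordLeq_transitive by (metis lists_UNIV)
qed

lemma tok_countable:
  assumes "countable (UNIV :: 'a set)"
  shows "countable (UNIV :: ('a + (rat + bool)) list set)"
proof -
  have "countable (UNIV :: ('a + (rat + bool)) set)"
    unfolding UNIV_sum using assms by auto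
  then show ?thesis using countable_lists by (metis lists_UNIV)
qed




lemma max_lip: "\<bar>max (x::real) y - max u v\<bar> \<le> \<bar>x - u\<bar> + \<bar>y - v\<bar>"
  by (smt (verit))
lemma clip_lip: "(A::real) \<le> f \<Longrightarrow> f \<le> B \<Longrightarrow> \<bar>f - min (max q A) B\<bar> \<le> \<bar>f - g\<bar> + \<bar>g - q\<bar>"
  by (smt (verit))
lemma minmax: "min (max (q::real) A) B = (-1) * max ((-1) * max q A) ((-1) * B)"
  by (smt (verit))

inductive_set Qset :: "(('a::distrib_lattice \<Rightarrow> real) \<Rightarrow> real) set" where
  q_delta: "fbl_delta x \<in> Qset"
| q_add: "f \<in> Qset \<Longrightarrow> g \<in> Qset \<Longrightarrow> (\<lambda>\<phi>. f \<phi> + g \<phi>) \<in> Qset"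
| q_scale: "f \<in> Qset \<Longrightarrow> (\<lambda>\<phi>. of_rat q * f \<phi>) \<in> Qset"
| q_sup: "f \<in> Qset \<Longrightarrow> g \<in> Qset \<Longrightarrow> (\<lambda>\<phi>. max (f \<phi>) (g \<phi>)) \<in> Qset"

lemma Q_gen: "f \<in> Qset \<Longrightarrow> f \<in> fbl_gen"
proof (induction rule: Qset.induct)
  case (q_delta x) show ?case by (rule fbl_gen.gen_delta)
next
  case (q_add f g) show ?case by (rule fbl_gen.gen_add[OF q_add.IH])
next
  case (q_scale f q) show ?case by (rule fbl_gen.gen_scale[OF q_scale.IH])
next
  case (q_sup f g) show ?case by (rule fbl_gen.gen_sup[OF q_sup.IH])
qed

definition stp :: "('a::distrib_lattice + (rat + bool)) \<Rightarrow> (('a \<Rightarrow> real) \<Rightarrow> real) list \<Rightarrow> (('a \<Rightarrow> real) \<Rightarrow> real) list" where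
  "stp t s = (case t of Inl x \<Rightarrow> fbl_delta x # s
     | Inr (Inl q) \<Rightarrow> (case s of f # s' \<Rightarrow> (\<lambda>\<phi>. of_rat q * f \<phi>) # s' | [] \<Rightarrow> [])
     | Inr (Inr bb) \<Rightarrow> (case s of f # g # s' \<Rightarrow>
          (if bb then (\<lambda>\<phi>. f \<phi> + g \<phi>) else (\<lambda>\<phi>. max (f \<phi>) (g \<phi>))) # s' | _ \<Rightarrow> s))"

lemma stp_simps:
  "stp (Inl x) s = fbl_delta x # s"
  "stp (Inr (Inl q)) (f # s) = (\<lambda>\<phi>. of_rat q * f \<phi>) # s"
  "stp (Inr (Inr True)) (f # g # s) = (\<lambda>\<phi>. f \<phi> + g \<phi>) # s"
  "stp (Inr (Inr False)) (f # g # s) = (\<lambda>\<phi>. max (f \<phi>) (g \<phi>)) # s"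
  unfolding stp_def by simp_all

lemma Q_prog: "f \<in> Qset \<Longrightarrow> \<exists>p. \<forall>s. fold stp p s = f # s"
proof (induction rule: Qset.induct)
  case (q_delta x)
  then show ?case by (intro exI[of _ "[Inl x]"]) (simp add: stp_simps)
next
  case (q_add f g)
  then obtain pf pg where "\<forall>s. fold stp pf s = f # s" "\<forall>s. fold stp pg s = g # s" by blast
  then show ?case by (intro exI[of _ "pg @ pf @ [Inr (Inr True)]"]) (simp add: stp_simps)
next
  case (q_scale f q)
  then obtain pf where "\<forall>s. fold stp pf s = f # s" by blast
  then show ?case by (intro exI[of _ "pf @ [Inr (Inl q)]"]) (simp add: stp_simps)
next
  case (q_sup f g)
  then obtain pf pg where "\<forall>s. fold stp pf s = f # s" "\<forall>s. fold stp pg s = g # s" by blast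
  then show ?case by (intro exI[of _ "pg @ pf @ [Inr (Inr False)]"]) (simp add: stp_simps)
qed

lemma Q_range: "Qset \<subseteq> range (\<lambda>p. hd (fold stp p []))"
proof
  fix f :: "('a \<Rightarrow> real) \<Rightarrow> real" assume "f \<in> Qset"
  then obtain p where "\<forall>s. fold stp p s = f # s" using Q_prog by blast
  then have "fold stp p [] = [f]" by simp
  then have "f = hd (fold stp p [])" by simp
  then show "f \<in> range (\<lambda>p. hd (fold stp p []))" by (rule range_eqI)
qed

lemma nb_le: "nb f r \<Longrightarrow> r \<le> s \<Longrightarrow> nb f s"
  unfolding nb_def by (meson order_trans)

lemma rat_approx: "(e::real) > 0 \<Longrightarrow> \<exists>q::rat. \<bar>(c::real) - of_rat q\<bar> < e"
proof -
  assume e: "e > 0"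
  obtain r where "r \<in> \<rat>" "c - e < r" "r < c + e" using Rats_dense_in_real[of "c - e" "c + e"] e by auto
  moreover from \<open>r \<in> \<rat>\<close> obtain q where "r = of_rat q" by (rule Rats_cases)
  ultimately have "\<bar>c - of_rat q\<bar> < e" unfolding abs_less_iff by linarith
  then show ?thesis by blast
qed

lemma approx: "g \<in> fbl_gen \<Longrightarrow> e > 0 \<Longrightarrow> \<exists>q\<in>Qset. nb (\<lambda>\<phi>. g \<phi> - q \<phi>) e"
proof (induction g arbitrary: e rule: fbl_gen.induct)
  case (gen_delta x)
  have "nb (\<lambda>\<phi>. fbl_delta x \<phi> - fbl_delta x \<phi>) e"
    by (simp, rule nb_le[OF nb_zero]) (use gen_delta in simp)
  then show ?case using Qset.q_delta by blast
next
  case (gen_add f g)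
  then obtain q1 q2 where q: "q1 \<in> Qset" "nb (\<lambda>\<phi>. f \<phi> - q1 \<phi>) (e/2)" "q2 \<in> Qset" "nb (\<lambda>\<phi>. g \<phi> - q2 \<phi>) (e/2)"
    by (meson half_gt_zero)
  have "nb (\<lambda>\<phi>. (f \<phi> + g \<phi>) - (q1 \<phi> + q2 \<phi>)) (e/2 + e/2)"
    by (rule nb_add[OF _ q(2) q(4)]) simp
  then show ?case using Qset.q_add[OF q(1) q(3)] by auto
next
  case (gen_sup f g)
  then obtain q1 q2 where q: "q1 \<in> Qset" "nb (\<lambda>\<phi>. f \<phi> - q1 \<phi>) (e/2)" "q2 \<in> Qset" "nb (\<lambda>\<phi>. g \<phi> - q2 \<phi>) (e/2)"
    by (meson half_gt_zero)
  have "nb (\<lambda>\<phi>. max (f \<phi>) (g \<phi>) - max (q1 \<phi>) (q2 \<phi>)) (e/2 + e/2)"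
    by (rule nb_add[OF _ q(2) q(4)]) (rule max_lip)
  then show ?case using Qset.q_sup[OF q(1) q(3)] by auto
next
  case (gen_scale f c)
  obtain M0 where "nb f M0" using gen_nb[OF gen_scale.hyps] by blast
  then have M: "nb f (\<bar>M0\<bar>)" using nb_le by force
  define M where "M = \<bar>M0\<bar>"
  have M0: "M \<ge> 0" unfolding M_def by simp
  obtain r :: rat where r: "\<bar>c - of_rat r\<bar> < e / (2 * (M + 1))"
    using rat_approx[of "e / (2 * (M + 1))" c] gen_scale.prems M0 by auto
  define \<eta> where "\<eta> = e / (2 * (\<bar>of_rat r\<bar> + 1))"
  have "2 * (\<bar>of_rat r\<bar> + 1) > (0::real)" by (simp add: add_nonneg_pos)
  then have \<eta>: "\<eta> > 0" unfolding \<eta>_def using gen_scale.prems by (rule divide_pos_pos[rotated])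
  obtain q where q: "q \<in> Qset" "nb (\<lambda>\<phi>. f \<phi> - q \<phi>) \<eta>" using gen_scale.IH[OF \<eta>] by blast
  have "nb (\<lambda>\<phi>. c * f \<phi> - of_rat r * q \<phi>) (\<bar>c - of_rat r\<bar> * M + \<bar>of_rat r\<bar> * \<eta>)"
  proof (rule nb_comb[OF _ _ _ M[folded M_def] q(2)])
    fix \<phi> :: "'a \<Rightarrow> real"
    have "c * f \<phi> - of_rat r * q \<phi> = (c - of_rat r) * f \<phi> + of_rat r * (f \<phi> - q \<phi>)"
      by (simp add: algebra_simps)
    then show "\<bar>c * f \<phi> - of_rat r * q \<phi>\<bar> \<le> \<bar>c - of_rat r\<bar> * \<bar>f \<phi>\<bar> + \<bar>of_rat r\<bar> * \<bar>f \<phi> - q \<phi>\<bar>"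
      by (metis abs_mult abs_triangle_ineq)
  qed auto
  moreover have "\<bar>c - of_rat r\<bar> * M + \<bar>of_rat r\<bar> * \<eta> \<le> e"
  proof -
    have "\<bar>c - of_rat r\<bar> * M \<le> e / (2 * (M + 1)) * M" using mult_right_mono[OF less_imp_le[OF r] M0] .
    also have "\<dots> \<le> e / 2" using M0 gen_scale.prems by (simp add: field_simps)
    finally have 1: "\<bar>c - of_rat r\<bar> * M \<le> e / 2" .
    have "\<bar>of_rat r\<bar> * \<eta> \<le> (\<bar>of_rat r\<bar> + 1) * \<eta>"
      using \<eta> by (intro mult_right_mono) simp_all
    also have "(\<bar>of_rat r\<bar> + 1) * \<eta> = e / 2"
    proof -
      have "\<bar>of_rat r\<bar> + 1 > (0::real)" by (simp add: add_nonneg_pos)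
      then show ?thesis unfolding \<eta>_def by (simp add: field_simps)
    qed
    finally have "\<bar>of_rat r\<bar> * \<eta> \<le> e / 2" .
    with 1 show ?thesis by linarith
  qed
  ultimately have "nb (\<lambda>\<phi>. c * f \<phi> - of_rat r * q \<phi>) e" by (rule nb_le)
  then show ?case using Qset.q_scale[OF q(1), of r] by auto
qed

definition clip :: "'a::distrib_lattice \<Rightarrow> 'a \<Rightarrow> (('a \<Rightarrow> real) \<Rightarrow> real) \<Rightarrow> (('a \<Rightarrow> real) \<Rightarrow> real)" where
  "clip a b q = (\<lambda>\<phi>. min (max (q \<phi>) (fbl_delta a \<phi>)) (fbl_delta b \<phi>))"

lemma clip_gen: "q \<in> fbl_gen \<Longrightarrow> clip a b q \<in> fbl_gen"
proof -
  assume q: "q \<in> fbl_gen"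
  have "clip a b q = (\<lambda>\<phi>. (-1) * max ((-1) * max (q \<phi>) (fbl_delta a \<phi>)) ((-1) * fbl_delta b \<phi>))"
    unfolding clip_def by (simp only: minmax)
  also have "\<dots> \<in> fbl_gen" using q by (intro fbl_gen.intros)
  finally show ?thesis .
qed

lemma clip_interval:
  assumes "a \<le> b" "q \<in> fbl_gen"
  shows "clip a b q \<in> fbl_interval a b"
proof -
  have le: "fbl_delta a \<phi> \<le> fbl_delta b \<phi>" for \<phi> using delta_le[OF assms(1)] .
  have "fbl_delta a \<phi> \<le> clip a b q \<phi> \<and> clip a b q \<phi> \<le> fbl_delta b \<phi>" for \<phi>
    unfolding clip_def using le[of \<phi>] by simp
  then show ?thesis unfolding fbl_interval_def using gen_FBL[OF clip_gen[OF assms(2)]] by blast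
qed

lemma upper_bound:
  fixes a b :: "'a::distrib_lattice"
  assumes ab: "a < b"
  shows "\<exists>D. fbl_dense_in D (fbl_interval a b) \<and>
             (countable D \<or> (card_of D, card_of (UNIV :: 'a set)) \<in> ordLeq)"
proof -
  define D where "D = clip a b ` Qset"
  have sub: "D \<subseteq> fbl_interval a b" unfolding D_def using clip_interval[OF less_imp_le[OF ab]] Q_gen by blast
  have dens: "\<exists>h\<in>D. fbl_norm (\<lambda>\<phi>. f \<phi> - h \<phi>) < ereal e" if f: "f \<in> fbl_interval a b" and e: "e > 0" for f e
  proof -
    have fF: "f \<in> FBL" and fb: "\<And>\<phi>. fbl_delta a \<phi> \<le> f \<phi> \<and> f \<phi> \<le> fbl_delta b \<phi>"
      using f unfolding fbl_interval_def by auto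
    obtain g where g: "g \<in> fbl_gen" "fbl_norm (\<lambda>\<phi>. f \<phi> - g \<phi>) < ereal (e/3)"
    proof -
      have "e/3 > 0" using e by simp
      then show ?thesis using fF that unfolding FBL_def by blast
    qed
    obtain q where q: "q \<in> Qset" "nb (\<lambda>\<phi>. g \<phi> - q \<phi>) (e/3)" using approx[OF g(1), of "e/3"] e by auto
    have "nb (\<lambda>\<phi>. f \<phi> - clip a b q \<phi>) (e/3 + e/3)"
    proof (rule nb_add[OF _ norm_lt_nb[OF g(2)] q(2)])
      fix \<phi> :: "'a \<Rightarrow> real"
      show "\<bar>f \<phi> - clip a b q \<phi>\<bar> \<le> \<bar>f \<phi> - g \<phi>\<bar> + \<bar>g \<phi> - q \<phi>\<bar>"
        using fb[of \<phi>] unfolding clip_def by (intro clip_lip) auto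
    qed
    then have "fbl_norm (\<lambda>\<phi>. f \<phi> - clip a b q \<phi>) < ereal e" by (rule nb_norm_lt) (use e in simp)
    moreover have "clip a b q \<in> D" using q D_def by auto
    ultimately show ?thesis by blast
  qed
  have "fbl_dense_in D (fbl_interval a b)" unfolding fbl_dense_in_def using sub dens by blast
  moreover have "countable D \<or> (card_of D, card_of (UNIV :: 'a set)) \<in> ordLeq"
  proof -
    have Dsub: "D \<subseteq> (clip a b \<circ> (\<lambda>p. hd (fold stp p []))) ` UNIV"
      unfolding D_def image_comp[symmetric] using Q_range by (rule image_mono)
    show ?thesis
    proof (cases "countable (UNIV :: 'a set)")
      case True
      then have "countable ((clip a b \<circ> (\<lambda>p. hd (fold stp p []))) ` (UNIV :: ('a + (rat + bool)) list set))"
        using countable_image[OF tok_countable[OF True]] by blast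
      then show ?thesis using Dsub countable_subset by blast
    next
      case False
      have "(card_of D, card_of ((clip a b \<circ> (\<lambda>p. hd (fold stp p []))) ` (UNIV :: ('a + (rat + bool)) list set))) \<in> ordLeq"
        using card_of_mono1[OF Dsub] .
      also have "(card_of ((clip a b \<circ> (\<lambda>p. hd (fold stp p []))) ` (UNIV :: ('a + (rat + bool)) list set)), card_of (UNIV :: ('a + (rat + bool)) list set)) \<in> ordLeq"
        by (rule card_of_image)
      also have "(card_of (UNIV :: ('a + (rat + bool)) list set), card_of (UNIV :: 'a set)) \<in> ordLeq"
        using tok_card[OF False] .
      finally show ?thesis by blast
    qed
  qed
  ultimately show ?thesis by blast
qed

theorem mainTheorem5:
  fixes a b :: "'a::distrib_lattice"
  assumes "a < b"
  shows "(\<forall>D. fbl_dense_in D (fbl_interval a b) \<longrightarrow>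
             infinite D \<and> (card_of {a..b}, card_of D) \<in> ordLeq)
       \<and> (\<exists>D. fbl_dense_in D (fbl_interval a b) \<and>
             (countable D \<or> (card_of D, card_of (UNIV :: 'a set)) \<in> ordLeq))"
  using lower_bound[OF assms] upper_bound[OF assms] by blast



end
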